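(* Consider the algorithm AOD described in the context, with known horizon $T$, under assumptions (A1)–(A3). For any interval $J=[i,j]\in\mathcal{D}$ with $j\le T$, \[ \sum_{t\in J}f_t(\mathbf{w}_t)-\min_{\mathbf{w}\in\Omega}\sum_{t\in J}f_t(\mathbf{w})\le\big(\sqrt{3c(j)}+DG\big)\sqrt{|J|}, \] where $c(j)=1+\ln j+\ln(1+\log_2 T)+\ln\frac{5+3\ln(1+j)}{2}$.
   Context: Online convex optimization: $\Omega\subseteq\mathbb{R}^d$ convex; in round $t=1,\ldots,T$ the learner plays $\mathbf{w}_t\in\Omega$, then a convex $f_t:\Omega\to\mathbb{R}$ is revealed. Assumptions: (A1) $\|\nabla f_t(\mathbf{w})\|_2\le G$ for all $\mathbf{w}\in\Omega$, $t\in[T]$; (A2) $\mathbf{0}\in\Omega$ and $\max_{\mathbf{w},\mathbf{w}'\in\Omega}\|\mathbf{w}-\mathbf{w}'\|_2\le D$; (A3) $0\le f_t\le1$ on $\Omega$. $\Pi_\Omega$ is Euclidean projection. Dense geometric covering intervals: $\mathcal{D}=\bigcup_{k\ge0,\,2^k\le T}\mathcal{D}_k$, $\mathcal{D}_k=\{[(i-1)2^k+1,\,i2^k]: i=1,2,\ldots\}$. Algorithm AOD: for each $I\in\mathcal{D}$ an expert $E_I$ runs online gradient descent $\mathbf{w}_{t+1,I}=\Pi_\Omega[\mathbf{w}_{t,I}-\eta_I\nabla f_t(\mathbf{w}_{t,I})]$, $\eta_I=D/(G\sqrt{|I|})$, over rounds $t\in I$; its initial point is arbitrary if $\min I=1$,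 and otherwise is the next iterate of the expert of the preceding same-length interval $[\min I-|I|,\min I-1]$ after processing $f_{\min I-1}$. Active experts at round $t$: $\mathcal{A}_t=\{E_I:I\in\mathcal{D},t\in I\}$. Meta-algorithm (AdaNormalHedge): $\Phi(R,C)=\exp([R]_+^2/(3C))$, $[x]_+=\max(0,x)$, $\Phi(0,0)=1$, $w(R,C)=\tfrac12(\Phi(R+1,C+1)-\Phi(R-1,C+1))$, $R_{t-1,I}=\sum_{u=\min I}^{t-1}(f_u(\mathbf{w}_u)-f_u(\mathbf{w}_{u,I}))$, $C_{t-1,I}=\sum_{u=\min I}^{t-1}|f_u(\mathbf{w}_u)-f_u(\mathbf{w}_{u,I})|$, $p_{t,I}=w(R_{t-1,I},C_{t-1,I})/\sum_{E_{I'}\in\mathcal{A}_t}w(R_{t-1,I'},C_{t-1,I'})$, played point $\mathbf{w}_t=\sum_{E_I\in\mathcal{A}_t}p_{t,I}\mathbf{w}_{t,I}$. *)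

theory Defs
  imports "HOL-Analysis.Analysis"
begin

definition levels :: "nat \<Rightarrow> nat set" where
  "levels T = {k. 2 ^ k \<le> T}"

text \<open>Start (min I) of the unique interval I of length 2^k containing round t \<ge> 1.\<close>
definition ivl_start :: "nat \<Rightarrow> nat \<Rightarrow> nat" where
  "ivl_start k t = ((t - 1) div 2 ^ k) * 2 ^ k + 1"

definition eta :: "real \<Rightarrow> real \<Rightarrow> nat \<Rightarrow> real" where
  "eta D G k = D / (G * sqrt (2 ^ k))"

text \<open>Online gradient descent with projection onto S, step size et, gradients g,
  rounds indexed from 1: value at round 1 is x1, value at round t+1 is
  Pi_S (value at t - et * g t (value at t)).  (Index 0 is unused.)\<close>
primrec ogd :: "'a::euclidean_space set \<Rightarrow> (nat \<Rightarrow> 'a \<Rightarrow> 'a) \<Rightarrow> real \<Rightarrow> 'a \<Rightarrow> nat \<Rightarrow> 'a" where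
  "ogd S g et x1 0 = x1"
| "ogd S g et x1 (Suc t) =
     (if t = 0 then x1 else closest_point S (ogd S g et x1 t - et *\<^sub>R g t (ogd S g et x1 t)))"

text \<open>Iterate w_{t,I} of the expert E_I at round t, where I is the level-k interval
  containing t. Since each expert starts at the next iterate of the preceding
  same-length expert, level k is one uninterrupted OGD run with step eta_k.\<close>
definition expert_pt ::
  "'a::euclidean_space set \<Rightarrow> (nat \<Rightarrow> 'a \<Rightarrow> 'a) \<Rightarrow> real \<Rightarrow> real \<Rightarrow> (nat \<Rightarrow> 'a) \<Rightarrow> nat \<Rightarrow> nat \<Rightarrow> 'a" where
  "expert_pt S g D G x1 k t = ogd S g (eta D G k) (x1 k) t"

definition Phi :: "real \<Rightarrow> real \<Rightarrow> real" where
  "Phi R C = exp ((max 0 R)\<^sup>2 / (3 * C))"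

definition anh_weight :: "real \<Rightarrow> real \<Rightarrow> real" where
  "anh_weight R C = (Phi (R + 1) (C + 1) - Phi (R - 1) (C + 1)) / 2"

definition R_stat :: "(nat \<Rightarrow> 'a \<Rightarrow> real) \<Rightarrow> (nat \<Rightarrow> 'a) \<Rightarrow> (nat \<Rightarrow> 'a) \<Rightarrow> nat \<Rightarrow> nat \<Rightarrow> real" where
  "R_stat f w x s t = (\<Sum>u = s..<t. f u (w u) - f u (x u))"

definition C_stat :: "(nat \<Rightarrow> 'a \<Rightarrow> real) \<Rightarrow> (nat \<Rightarrow> 'a) \<Rightarrow> (nat \<Rightarrow> 'a) \<Rightarrow> nat \<Rightarrow> nat \<Rightarrow> real" where
  "C_stat f w x s t = (\<Sum>u = s..<t. \<bar>f u (w u) - f u (x u)\<bar>)"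

text \<open>Unnormalised weight of the active level-k expert at round t (uses the
  played points w u for u < t only).\<close>
definition aod_w ::
  "'a::euclidean_space set \<Rightarrow> (nat \<Rightarrow> 'a \<Rightarrow> real) \<Rightarrow> (nat \<Rightarrow> 'a \<Rightarrow> 'a) \<Rightarrow> real \<Rightarrow> real
    \<Rightarrow> (nat \<Rightarrow> 'a) \<Rightarrow> (nat \<Rightarrow> 'a) \<Rightarrow> nat \<Rightarrow> nat \<Rightarrow> real" where
  "aod_w S f g D G x1 w k t =
     anh_weight (R_stat f w (expert_pt S g D G x1 k) (ivl_start k t) t)
                (C_stat f w (expert_pt S g D G x1 k) (ivl_start k t) t)"

definition aod_p ::
  "'a::euclidean_space set \<Rightarrow> (nat \<Rightarrow> 'a \<Rightarrow> real) \<Rightarrow> (nat \<Rightarrow> 'a \<Rightarrow> 'a) \<Rightarrow> real \<Rightarrow> real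
    \<Rightarrow> nat \<Rightarrow> (nat \<Rightarrow> 'a) \<Rightarrow> (nat \<Rightarrow> 'a) \<Rightarrow> nat \<Rightarrow> nat \<Rightarrow> real" where
  "aod_p S f g D G T x1 w k t =
     aod_w S f g D G x1 w k t / (\<Sum>k'\<in>levels T. aod_w S f g D G x1 w k' t)"

text \<open>w is the sequence of points played by AOD in rounds 1..T (the recurrence
  determines w t from w 1, ..., w (t-1)).\<close>
definition is_aod_play ::
  "'a::euclidean_space set \<Rightarrow> (nat \<Rightarrow> 'a \<Rightarrow> real) \<Rightarrow> (nat \<Rightarrow> 'a \<Rightarrow> 'a) \<Rightarrow> real \<Rightarrow> real
    \<Rightarrow> nat \<Rightarrow> (nat \<Rightarrow> 'a) \<Rightarrow> (nat \<Rightarrow> 'a) \<Rightarrow> bool" where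
  "is_aod_play S f g D G T x1 w \<longleftrightarrow>
     (\<forall>t\<in>{1..T}. w t = (\<Sum>k\<in>levels T. aod_p S f g D G T x1 w k t *\<^sub>R expert_pt S g D G x1 k t))"

definition c_fun :: "nat \<Rightarrow> nat \<Rightarrow> real" where
  "c_fun T j = 1 + ln (real j) + ln (1 + log 2 (real T)) + ln ((5 + 3 * ln (1 + real j)) / 2)"

end

theory Submission
  imports Defs "HOL-Probability.Hoeffding"
begin


lemma Phi_pos: "Phi R C > 0" unfolding Phi_def by simp

lemma Phi_nonpos: "R \<le> 0 \<Longrightarrow> Phi R C = 1" unfolding Phi_def by simp

lemma Phi_mono_R: assumes "R \<le> R'" "C \<ge> 0" shows "Phi R C \<le> Phi R' C"
proof -
  have "(max 0 R)\<^sup>2 \<le> (max 0 R')\<^sup>2" using assms by (intro power_mono) auto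
  then have "(max 0 R)\<^sup>2 / (3*C) \<le> (max 0 R')\<^sup>2 / (3*C)" using assms by (intro divide_right_mono) auto
  then show ?thesis unfolding Phi_def by simp
qed

lemma anh_weight_nonneg: "C \<ge> 0 \<Longrightarrow> anh_weight R C \<ge> 0"
  unfolding anh_weight_def using Phi_mono_R[of "R-1" "R+1" "C+1"] by simp

lemma qol:
  fixes X x0 x1 s C :: real
  assumes s: "0 \<le> s" "s \<le> 1" and C: "0 \<le> C" and X: "0 \<le> X" "X \<le> (1-s)*x0 + s*x1"
    and x: "0 \<le> x0" "0 \<le> x1" and C0: "C = 0 \<Longrightarrow> x0 = 0"
  shows "X\<^sup>2/(3*(C+s)) \<le> (1-s)*(x0\<^sup>2/(3*C)) + s*(x1\<^sup>2/(3*(C+1)))"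
proof (cases "s = 0")
  case True
  then have "X\<^sup>2 \<le> x0\<^sup>2" using X by (intro power_mono) auto
  then show ?thesis using True C by (auto intro: divide_right_mono)
next
  case False
  then have sp: "s > 0" using s by auto
  show ?thesis
  proof (cases "C = 0")
    case True
    then have "x0 = 0" using C0 by auto
    then have "X \<le> s * x1" using X by auto
    then have "X\<^sup>2 \<le> (s*x1)\<^sup>2" using X by (intro power_mono) auto
    then have "X\<^sup>2/(3 * s) \<le> (s*x1)\<^sup>2/(3 * s)" using sp by (intro divide_right_mono) auto
    also have "\<dots> = s*(x1\<^sup>2/3)" using sp by (simp add: power2_eq_square field_simps)
    finally show ?thesis using True by simp
  next
    case False
    then have Cp: "C > 0" using C by auto
    have "X\<^sup>2 \<le> ((1-s)*x0 + s*x1)\<^sup>2" using X by (intro power_mono) auto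
    then have "X\<^sup>2/(3*(C+s)) \<le> ((1-s)*x0 + s*x1)\<^sup>2/(3*(C+s))" using Cp sp by (intro divide_right_mono) auto
    also have "\<dots> \<le> (1-s)*(x0\<^sup>2/(3*C)) + s*(x1\<^sup>2/(3*(C+1)))"
    proof -
      have key: "((1-s)*x0 + s*x1)\<^sup>2 * (C*(C+1)) \<le> ((1-s)*x0\<^sup>2*(C+1) + s*x1\<^sup>2*C) * (C+s)"
      proof -
        have "((1-s)*x0\<^sup>2*(C+1) + s*x1\<^sup>2*C) * (C+s) - ((1-s)*x0 + s*x1)\<^sup>2 * (C*(C+1))
              = (1-s)* s*(x0*(C+1) - x1*C)\<^sup>2"
          by (simp add: power2_eq_square algebra_simps)
        moreover have "(1-s)* s*(x0*(C+1) - x1*C)\<^sup>2 \<ge> 0" using s by auto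
        ultimately show ?thesis by linarith
      qed
      have eqR: "(1-s)*(x0\<^sup>2/(3*C)) + s*(x1\<^sup>2/(3*(C+1))) = ((1-s)*x0\<^sup>2*(C+1) + s*x1\<^sup>2*C)/(3*(C*(C+1)))"
        using Cp by (simp add: field_simps add_nonneg_eq_0_iff)
      have "((1-s)*x0 + s*x1)\<^sup>2/(3*(C+s)) \<le> ((1-s)*x0\<^sup>2*(C+1) + s*x1\<^sup>2*C)/(3*(C*(C+1)))"
        using key Cp sp apply (simp add: divide_le_eq le_divide_eq)
        by (simp add: algebra_simps)
      then show ?thesis using eqR by simp
    qed
    finally show ?thesis .
  qed
qed

lemma exp_interp: fixes s p q :: real shows "0 \<le> s \<Longrightarrow> s \<le> 1 \<Longrightarrow> exp ((1-s)*p + s*q) \<le> (1-s)*exp p + s*exp q"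
  using convex_onD[OF exp_convex, of s p q] by simp

lemma Phi_interp:
  fixes R C s a :: real
  assumes s: "0 \<le> s" "s \<le> 1" and C: "0 \<le> C" and RC: "\<bar>R\<bar> \<le> C" and a: "a = 1 \<or> a = -1"
  shows "Phi (R + a * s) (C+s) \<le> (1-s)*Phi R C + s*Phi (R+a) (C+1)"
proof -
  have conv: "max 0 (R + a * s) \<le> (1-s)*max 0 R + s*max 0 (R+a)"
  proof -
    have e: "R + a * s = (1-s)*R + s*(R+a)" by (simp add: algebra_simps)
    have "(1-s)*R \<le> (1-s)*max 0 R" using s by (intro mult_left_mono) auto
    moreover have "s*(R+a) \<le> s*max 0 (R+a)" using s by (intro mult_left_mono) auto
    moreover have "0 \<le> (1-s)*max 0 R + s*max 0 (R+a)" using s by auto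
    ultimately show ?thesis unfolding e by auto
  qed
  have q: "(max 0 (R + a * s))\<^sup>2/(3*(C+s)) \<le> (1-s)*((max 0 R)\<^sup>2/(3*C)) + s*((max 0 (R+a))\<^sup>2/(3*(C+1)))"
    by (rule qol[OF s C _ conv]) (use RC in auto)
  have "Phi (R + a * s) (C+s) \<le> exp ((1-s)*((max 0 R)\<^sup>2/(3*C)) + s*((max 0 (R+a))\<^sup>2/(3*(C+1))))"
    unfolding Phi_def using q by simp
  also have "\<dots> \<le> (1-s)*Phi R C + s*Phi (R+a) (C+1)"
    unfolding Phi_def by (rule exp_interp[OF s])
  finally show ?thesis .
qed

lemma cosh_bound:
  fixes m d :: real assumes "d \<ge> 0"
  shows "(exp (m + d) + exp (m - d))/2 \<le> exp (m + d\<^sup>2/2)"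
proof -
  have "-(2*d)*(1/2) + ln (1 + (1/2)*(exp (2*d) - 1)) \<le> (2*d)\<^sup>2/8"
    using Hoeffdings_lemma_aux[of "2*d" "1/2"] assms by simp
  then have "ln ((1 + exp (2*d))/2) \<le> d + d\<^sup>2/2"
    by (simp add: power2_eq_square field_simps)
  then have "(1 + exp (2*d))/2 \<le> exp (d + d\<^sup>2/2)"
    by (metis exp_le_cancel_iff exp_ln add_pos_pos divide_pos_pos exp_gt_zero zero_less_one zero_less_numeral)
  then have "exp (m - d) * ((1 + exp (2*d))/2) \<le> exp (m - d) * exp (d + d\<^sup>2/2)"
    by (intro mult_left_mono) auto
  moreover have "exp (m - d) * ((1 + exp (2*d))/2) = (exp (m + d) + exp (m - d))/2"
    by (simp add: field_simps flip: exp_add)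
  moreover have "exp (m - d) * exp (d + d\<^sup>2/2) = exp (m + d\<^sup>2/2)"
    by (simp flip: exp_add)
  ultimately show ?thesis by simp
qed

lemma exp_third_le: "exp (1/3::real) \<le> 14/10"
proof (rule ccontr)
  assume "\<not> ?thesis"
  then have "(14/10::real)^3 < exp (1/3) ^ 3" by (intro power_strict_mono) auto
  also have "exp (1/3::real) ^ 3 = exp 1" by (simp flip: exp_of_nat_mult)
  finally show False using e_less_272 by (simp add: eval_nat_numeral)
qed

lemma exp_small: fixes A :: real assumes "A \<ge> 1" shows "exp (1/(3*A)) \<le> 1 + (exp (1/3) - 1)/A"
proof -
  have "exp ((1 - 1/A)*0 + (1/A)*(1/3)) \<le> (1 - 1/A)*exp 0 + (1/A)*exp (1/3)"
    using assms by (intro exp_interp) auto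
  then show ?thesis by (simp add: field_simps diff_divide_distrib)
qed

lemma key_ineq:
  fixes R C :: real
  assumes C: "0 \<le> C" and RC: "\<bar>R\<bar> \<le> C"
  shows "(Phi (R+1) (C+1) + Phi (R-1) (C+1))/2 - Phi R C \<le> 2/(C+1)"
proof (cases "R \<le> 0")
  case True
  have "(max 0 (R+1))\<^sup>2 \<le> 1\<^sup>2" using True by (intro power_mono) auto
  then have "(max 0 (R+1))\<^sup>2/(3*(C+1)) \<le> 1/(3*(C+1))" using C by (intro divide_right_mono) auto
  then have "Phi (R+1) (C+1) \<le> exp (1/(3*(C+1)))" unfolding Phi_def by simp
  also have "\<dots> \<le> 1 + 2*(1/(3*(C+1)))" using C by (intro real_exp_bound_lemma) (auto simp: field_simps)
  finally have "Phi (R+1) (C+1) \<le> 1 + 2*(1/(3*(C+1)))" .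
  moreover have "Phi (R-1) (C+1) = 1" "Phi R C = 1" using True by (auto intro: Phi_nonpos)
  moreover have "1/(3*(C+1)) \<le> 2/(C+1)" using C by (simp add: field_simps)
  ultimately show ?thesis by simp
next
  case False
  then have Rp: "R > 0" by simp
  then have Cp: "C > 0" using RC by simp
  define A where "A = C + 1"
  have Ap: "A > 0" and A1: "A \<ge> 1" using C by (auto simp: A_def)
  define s where "s = R\<^sup>2/(3*C)"
  define x where "x = 1/(3*A) - R\<^sup>2/(9*A\<^sup>2)"
  have PR: "Phi R C = exp s" unfolding Phi_def s_def using Rp by simp
  have P1: "Phi (R+1) A = exp ((R\<^sup>2+1)/(3*A) + 2*R/(3*A))" unfolding Phi_def using Rp Ap
    by (simp add: power2_eq_square field_simps)
  have "(max 0 (R-1))\<^sup>2 \<le> (R-1)\<^sup>2" by (cases "R \<ge> 1") (auto simp: power2_eq_square)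
  then have "(max 0 (R-1))\<^sup>2/(3*A) \<le> (R-1)\<^sup>2/(3*A)" using Ap by (intro divide_right_mono) auto
  then have "Phi (R-1) A \<le> exp ((R-1)\<^sup>2/(3*A))" unfolding Phi_def by simp
  also have "(R-1)\<^sup>2/(3*A) = (R\<^sup>2+1)/(3*A) - 2*R/(3*A)"
    using Ap by (simp add: power2_eq_square field_simps)
  finally have P2: "Phi (R-1) A \<le> exp ((R\<^sup>2+1)/(3*A) - 2*R/(3*A))" .
  have "(Phi (R+1) A + Phi (R-1) A)/2 \<le> exp ((R\<^sup>2+1)/(3*A) + (2*R/(3*A))\<^sup>2/2)"
    using cosh_bound[of "2*R/(3*A)" "(R\<^sup>2+1)/(3*A)"] P1 P2 Rp Ap by simp
  also have "(R\<^sup>2+1)/(3*A) + (2*R/(3*A))\<^sup>2/2 \<le> s + x"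
  proof -
    have "R\<^sup>2/(3*C) - R\<^sup>2/(3*A) - R\<^sup>2/(3*A\<^sup>2) = R\<^sup>2*(A*A - C*A - C)/(3*C*A\<^sup>2)"
      using Cp Ap by (simp add: power2_eq_square field_simps)
    also have "A*A - C*A - C = 1" unfolding A_def by (simp add: algebra_simps)
    finally have "R\<^sup>2/(3*C) - R\<^sup>2/(3*A) - R\<^sup>2/(3*A\<^sup>2) = R\<^sup>2/(3*C*A\<^sup>2)" by simp
    moreover have "R\<^sup>2/(3*C*A\<^sup>2) \<ge> 0" using Cp Ap by simp
    ultimately have "R\<^sup>2/(3*A) + R\<^sup>2/(3*A\<^sup>2) \<le> R\<^sup>2/(3*C)" by linarith
    moreover have "(R\<^sup>2+1)/(3*A) + (2*R/(3*A))\<^sup>2/2 = R\<^sup>2/(3*A) + R\<^sup>2/(3*A\<^sup>2) + x"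
      unfolding x_def using Ap by (simp add: power2_eq_square field_simps)
    ultimately show ?thesis unfolding s_def by linarith
  qed
  finally have avg: "(Phi (R+1) A + Phi (R-1) A)/2 \<le> exp (s + x)" by simp
  show ?thesis
  proof (cases "R\<^sup>2 \<ge> 3*A")
    case True
    then have "R\<^sup>2/(9*A\<^sup>2) \<ge> 3*A/(9*A\<^sup>2)" using Ap by (intro divide_right_mono) auto
    moreover have "3*A/(9*A\<^sup>2) = 1/(3*A)" using Ap by (simp add: power2_eq_square field_simps)
    ultimately have "x \<le> 0" unfolding x_def by linarith
    then have ee: "exp (s + x) \<le> exp s" by simp
    have "0 \<le> 2/(C+1)" using C by simp
    then show ?thesis using avg PR ee unfolding A_def by linarith
  next
    case False
    have s43: "s \<le> 4/3"
    proof (cases "R \<le> 4")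
      case True
      have "R\<^sup>2/(3*C) \<le> R\<^sup>2/(3*R)" using Rp RC by (intro divide_left_mono) auto
      also have "\<dots> = R/3" using Rp by (simp add: power2_eq_square)
      finally show ?thesis using True unfolding s_def by simp
    next
      case False
      then have C4: "C > 4" using RC by simp
      have "R\<^sup>2/(3*C) \<le> 3*A/(3*C)" using \<open>\<not> R\<^sup>2 \<ge> 3*A\<close> Cp by (intro divide_right_mono) auto
      also have "3*A/(3*C) = 1 + 1/C" unfolding A_def using Cp by (simp add: field_simps)
      also have "1/C \<le> 1/4" using C4 by (simp add: field_simps)
      finally show ?thesis unfolding s_def by simp
    qed
    have xle: "x \<le> 1/(3*A)" unfolding x_def using Ap by simp
    have "exp x \<le> exp (1/(3*A))" using xle by simp
    then have E: "exp x - 1 \<le> (exp (1/3) - 1)/A" using exp_small[OF A1] by linarith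
    have E0: "0 \<le> (exp (1/3) - 1)/A" using Ap by simp
    have "exp (s + x) - exp s = exp s * (exp x - 1)" by (simp add: exp_add algebra_simps)
    also have "\<dots> \<le> exp s * ((exp (1/3) - 1)/A)" using E by (intro mult_left_mono) auto
    also have "\<dots> \<le> exp (4/3) * ((exp (1/3) - 1)/A)" using s43 E0 by (intro mult_right_mono) auto
    also have "exp (4/3::real) = exp (1/3) ^ 4" by (simp flip: exp_of_nat_mult)
    also have "exp (1/3) ^ 4 * ((exp (1/3) - 1)/A) \<le> (14/10)^4 * ((14/10 - 1)/A)"
      using exp_third_le Ap by (intro mult_mono power_mono divide_right_mono) auto
    also have "\<dots> \<le> 2/A" using Ap by (simp add: field_simps)
    finally show ?thesis using avg PR unfolding A_def by linarith
  qed
qed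

lemma anh_step:
  fixes R C r :: real
  assumes C: "0 \<le> C" and RC: "\<bar>R\<bar> \<le> C" and r: "\<bar>r\<bar> \<le> 1"
  shows "Phi (R+r) (C+\<bar>r\<bar>) \<le> Phi R C + anh_weight R C * r + 2*\<bar>r\<bar>/(C+1)"
proof -
  have key: "(Phi (R+1) (C+1) + Phi (R-1) (C+1))/2 - Phi R C \<le> 2/(C+1)" by (rule key_ineq[OF C RC])
  show ?thesis
  proof (cases "r \<ge> 0")
    case True
    have "Phi (R + 1 * r) (C+r) \<le> (1-r)*Phi R C + r*Phi (R+1) (C+1)"
      using True r by (intro Phi_interp[OF _ _ C RC]) auto
    also have "\<dots> = Phi R C + r*(Phi (R+1) (C+1) - Phi R C)" by (simp add: algebra_simps)
    also have "r*(Phi (R+1) (C+1) - Phi R C) \<le> r*(anh_weight R C + 2/(C+1))"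
    proof -
      have "Phi (R+1) (C+1) - Phi R C \<le> anh_weight R C + 2/(C+1)" using key unfolding anh_weight_def by (simp add: field_simps)
      then show ?thesis using True by (intro mult_left_mono) auto
    qed
    finally show ?thesis using True by (simp add: algebra_simps)
  next
    case False
    define s where "s = -r"
    have s: "0 \<le> s" "s \<le> 1" using False r by (auto simp: s_def)
    have "Phi (R + (-1) * s) (C+s) \<le> (1-s)*Phi R C + s*Phi (R+(-1)) (C+1)"
      using s by (intro Phi_interp[OF _ _ C RC]) auto
    also have "\<dots> = Phi R C + s*(Phi (R-1) (C+1) - Phi R C)" by (simp add: algebra_simps)
    also have "s*(Phi (R-1) (C+1) - Phi R C) \<le> s*(- anh_weight R C + 2/(C+1))"
    proof -
      have "Phi (R-1) (C+1) - Phi R C \<le> - anh_weight R C + 2/(C+1)" using key unfolding anh_weight_def by (simp add: field_simps)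
      then show ?thesis using s by (intro mult_left_mono) auto
    qed
    finally show ?thesis using False unfolding s_def by (simp add: algebra_simps)
  qed
qed

lemma anh_seq:
  fixes r :: "nat \<Rightarrow> real"
  assumes "\<And>u. s \<le> u \<Longrightarrow> u < t \<Longrightarrow> \<bar>r u\<bar> \<le> 1"
  shows "Phi (\<Sum>u=s..<t. r u) (\<Sum>u=s..<t. \<bar>r u\<bar>) \<le> 1
     + (\<Sum>u=s..<t. anh_weight (\<Sum>v=s..<u. r v) (\<Sum>v=s..<u. \<bar>r v\<bar>) * r u)
     + 2 * (\<Sum>u=s..<t. \<bar>r u\<bar> / ((\<Sum>v=s..<u. \<bar>r v\<bar>) + 1))"
  using assms
proof (induction t)
  case 0
  then show ?case by (simp add: Phi_def)
next
  case (Suc t)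
  show ?case
  proof (cases "s \<le> t")
    case False
    then have "{s..<Suc t} = {}" by auto
    then show ?thesis by (simp add: Phi_def)
  next
    case True
    define R where "R = (\<Sum>v=s..<t. r v)"
    define C where "C = (\<Sum>v=s..<t. \<bar>r v\<bar>)"
    have C0: "0 \<le> C" unfolding C_def by (simp add: sum_nonneg)
    have RC: "\<bar>R\<bar> \<le> C" unfolding R_def C_def by (rule sum_abs)
    have rt: "\<bar>r t\<bar> \<le> 1" using Suc.prems True by auto
    have IH: "Phi R C \<le> 1 + (\<Sum>u=s..<t. anh_weight (\<Sum>v=s..<u. r v) (\<Sum>v=s..<u. \<bar>r v\<bar>) * r u)
     + 2 * (\<Sum>u=s..<t. \<bar>r u\<bar> / ((\<Sum>v=s..<u. \<bar>r v\<bar>) + 1))"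
      unfolding R_def C_def using Suc by auto
    have "Phi (R + r t) (C + \<bar>r t\<bar>) \<le> Phi R C + anh_weight R C * r t + 2*\<bar>r t\<bar>/(C+1)"
      by (rule anh_step[OF C0 RC rt])
    then show ?thesis using IH True unfolding R_def C_def by (simp add: algebra_simps)
  qed
qed

lemma log_step:
  fixes a C :: real assumes "0 \<le> a" "a \<le> 1" "0 \<le> C"
  shows "a/(C+1) \<le> 2*(ln (1+C+a) - ln (1+C))"
proof -
  define x where "x = a/(C+1)"
  have x: "0 \<le> x" "x \<le> 1" using assms by (auto simp: x_def field_simps)
  have "exp (x/2) \<le> 1 + 2*(x/2)" using x by (intro real_exp_bound_lemma) auto
  then have "ln (exp (x/2)) \<le> ln (1+x)" using x by (subst ln_le_cancel_iff) auto
  then have "x/2 \<le> ln (1+x)" by simp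
  also have "1 + x = (1+C+a)/(1+C)" using assms by (simp add: x_def field_simps)
  also have "ln \<dots> = ln (1+C+a) - ln (1+C)" using assms by (subst ln_div) auto
  finally have "x/2 \<le> ln (1+C+a) - ln (1+C)" .
  then have "2*(x/2) \<le> 2*(ln (1+C+a) - ln (1+C))" by (intro mult_left_mono) auto
  then have "x \<le> 2*(ln (1+C+a) - ln (1+C))" by simp
  then show ?thesis by (simp only: x_def)
qed

lemma log_seq:
  fixes r :: "nat \<Rightarrow> real"
  assumes "\<And>u. s \<le> u \<Longrightarrow> u < t \<Longrightarrow> \<bar>r u\<bar> \<le> 1"
  shows "(\<Sum>u=s..<t. \<bar>r u\<bar> / ((\<Sum>v=s..<u. \<bar>r v\<bar>) + 1)) \<le> 2 * ln (1 + (\<Sum>u=s..<t. \<bar>r u\<bar>))"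
  using assms
proof (induction t)
  case 0
  then show ?case by simp
next
  case (Suc t)
  show ?case
  proof (cases "s \<le> t")
    case False
    then have "{s..<Suc t} = {}" by auto
    then show ?thesis by simp
  next
    case True
    define C where "C = (\<Sum>v=s..<t. \<bar>r v\<bar>)"
    have C0: "0 \<le> C" unfolding C_def by (simp add: sum_nonneg)
    have rt: "\<bar>r t\<bar> \<le> 1" using Suc.prems True by auto
    have IH: "(\<Sum>u=s..<t. \<bar>r u\<bar> / ((\<Sum>v=s..<u. \<bar>r v\<bar>) + 1)) \<le> 2 * ln (1 + C)"
      unfolding C_def using Suc by auto
    have "\<bar>r t\<bar>/(C+1) \<le> 2*(ln (1+C+\<bar>r t\<bar>) - ln (1+C))" by (rule log_step) (use C0 rt in auto)
    then show ?thesis using IH True unfolding C_def by (simp add: algebra_simps)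
  qed
qed



lemma div_iff_nat: fixes m L i :: nat assumes "L > 0"
  shows "m div L = i \<longleftrightarrow> L*i \<le> m \<and> m < L*Suc i"
proof
  assume h: "m div L = i"
  have e: "m = L*(m div L) + m mod L" by simp
  have "m mod L < L" using assms by simp
  moreover have "m = L*i + m mod L" using e h by simp
  moreover have "L*Suc i = L*i + L" by simp
  ultimately show "L*i \<le> m \<and> m < L*Suc i" by linarith
next
  assume "L*i \<le> m \<and> m < L*Suc i"
  then show "m div L = i" by (intro div_nat_eqI) auto
qed

lemma convex_grad:
  fixes f :: "'a::euclidean_space \<Rightarrow> real"
  assumes S: "convex S" and fc: "convex_on S f"
    and d: "(f has_derivative (\<lambda>h. gv \<bullet> h)) (at v within S)"
    and u: "u \<in> S" and v: "v \<in> S"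
  shows "f v - f u \<le> gv \<bullet> (v - u)"
proof -
  define dd where "dd = u - v"
  define p where "p = (\<lambda>l::real. v + l *\<^sub>R dd)"
  define \<phi> where "\<phi> = (\<lambda>l. f (p l))"
  have pS: "p ` {0..1} \<subseteq> S"
  proof
    fix y assume "y \<in> p ` {0..1}"
    then obtain l where l: "l \<in> {0..1}" "y = p l" by auto
    have "p l = (1 - l) *\<^sub>R v + l *\<^sub>R u" unfolding p_def dd_def by (simp add: algebra_simps)
    then show "y \<in> S" using l S u v by (simp add: convex_def)
  qed
  have pd: "(p has_derivative (\<lambda>l. l *\<^sub>R dd)) (at 0 within {0..1})"
    unfolding p_def by (auto intro!: derivative_eq_intros)
  have p0: "p 0 = v" unfolding p_def by simp
  have d': "(f has_derivative (\<lambda>h. gv \<bullet> h)) (at (p 0) within p ` {0..1})"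
    using has_derivative_subset[OF d pS] p0 by simp
  have "(\<phi> has_derivative (\<lambda>l. gv \<bullet> (l *\<^sub>R dd))) (at 0 within {0..1})"
    unfolding \<phi>_def using has_derivative_in_compose[OF pd d'] by simp
  moreover have "(\<lambda>l. gv \<bullet> (l *\<^sub>R dd)) = (*) (gv \<bullet> dd)" by (auto simp: fun_eq_iff)
  ultimately have "(\<phi> has_field_derivative (gv \<bullet> dd)) (at 0 within {0..1})"
    by (simp add: has_field_derivative_def)
  then have lim: "((\<lambda>y. (\<phi> y - \<phi> 0) / (y - 0)) \<longlongrightarrow> gv \<bullet> dd) (at 0 within {0..1})"
    by (simp add: has_field_derivative_iff)
  have ev: "\<forall>\<^sub>F y in at 0 within {0..1}. (\<phi> y - \<phi> 0) / (y - 0) \<le> f u - f v"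
    unfolding eventually_at_filter
  proof (rule always_eventually, intro allI impI)
    fix y :: real assume y: "y \<noteq> 0" "y \<in> {0..1}"
    then have yp: "y > 0" by auto
    have "p y = (1 - y) *\<^sub>R v + y *\<^sub>R u" unfolding p_def dd_def by (simp add: algebra_simps)
    then have "\<phi> y \<le> (1 - y) * f v + y * f u" unfolding \<phi>_def using convex_onD[OF fc, of y v u] y u v by auto
    moreover have "\<phi> 0 = f v" unfolding \<phi>_def p_def by simp
    ultimately have "\<phi> y - \<phi> 0 \<le> y * (f u - f v)" by (simp add: algebra_simps)
    then show "(\<phi> y - \<phi> 0) / (y - 0) \<le> f u - f v" using yp by (simp add: divide_le_eq mult.commute)
  qed
  have nb: "at (0::real) within {0..1} \<noteq> bot" by (simp add: at_within_Icc_at_right)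
  have "gv \<bullet> dd \<le> f u - f v" by (rule tendsto_upperbound[OF lim ev nb])
  then show ?thesis unfolding dd_def by (simp add: inner_diff_right)
qed

lemma ogd_step:
  fixes y u gg :: "'a::euclidean_space"
  assumes S: "convex S" "closed S" and y: "y \<in> S" and u: "u \<in> S" and eta: "\<eta> > 0" and gG: "norm gg \<le> G"
  shows "gg \<bullet> (y - u) \<le> ((norm (y - u))\<^sup>2 - (norm (closest_point S (y - \<eta> *\<^sub>R gg) - u))\<^sup>2)/(2*\<eta>) + \<eta>*G\<^sup>2/2"
proof -
  have ne: "S \<noteq> {}" using y by auto
  have "dist (closest_point S (y - \<eta> *\<^sub>R gg)) (closest_point S u) \<le> dist (y - \<eta> *\<^sub>R gg) u"
    by (rule closest_point_lipschitz[OF S ne])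
  then have n1: "norm (closest_point S (y - \<eta> *\<^sub>R gg) - u) \<le> norm ((y - u) - \<eta> *\<^sub>R gg)"
    using closest_point_self[OF u] by (simp add: dist_norm algebra_simps)
  have "(norm (closest_point S (y - \<eta> *\<^sub>R gg) - u))\<^sup>2 \<le> (norm ((y - u) - \<eta> *\<^sub>R gg))\<^sup>2"
    using n1 by (intro power_mono) auto
  also have "(norm ((y - u) - \<eta> *\<^sub>R gg))\<^sup>2 = (norm (y - u))\<^sup>2 - 2*\<eta>*(gg \<bullet> (y - u)) + \<eta>\<^sup>2 * (norm gg)\<^sup>2"
  proof -
    define a where "a = y - u"
    have "(norm (a - \<eta> *\<^sub>R gg))\<^sup>2 = (a - \<eta> *\<^sub>R gg) \<bullet> (a - \<eta> *\<^sub>R gg)" by (rule power2_norm_eq_inner)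
    also have "\<dots> = a \<bullet> a - 2*\<eta>*(gg \<bullet> a) + \<eta>\<^sup>2 * (gg \<bullet> gg)"
      by (simp add: inner_diff_left inner_diff_right inner_commute power2_eq_square algebra_simps)
    also have "\<dots> = (norm a)\<^sup>2 - 2*\<eta>*(gg \<bullet> a) + \<eta>\<^sup>2 * (norm gg)\<^sup>2" by (simp add: power2_norm_eq_inner)
    finally show ?thesis unfolding a_def .
  qed
  also have "\<eta>\<^sup>2 * (norm gg)\<^sup>2 \<le> \<eta>\<^sup>2 * G\<^sup>2" using gG by (intro mult_left_mono power_mono) auto
  finally have "2*\<eta>*(gg \<bullet> (y - u)) \<le> (norm (y - u))\<^sup>2 - (norm (closest_point S (y - \<eta> *\<^sub>R gg) - u))\<^sup>2 + \<eta>\<^sup>2 * G\<^sup>2"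
    by linarith
  then show ?thesis using eta by (simp add: field_simps power2_eq_square)
qed



lemma ogd_in: assumes "closed S" "x1 \<in> S" shows "ogd S g et x1 t \<in> S"
proof (induction t)
  case 0 then show ?case using assms by simp
next
  case (Suc t)
  have ne: "S \<noteq> {}" using assms by auto
  show ?case using assms closest_point_in_set[OF assms(1) ne] by simp
qed

lemma ogd_sum:
  fixes y gr :: "nat \<Rightarrow> 'a::euclidean_space"
  assumes S: "convex S" "closed S" and u: "u \<in> S" and eta: "\<eta> > 0"
    and rec: "\<And>t. s \<le> t \<Longrightarrow> t < s+n \<Longrightarrow> y (Suc t) = closest_point S (y t - \<eta> *\<^sub>R gr t)"
    and inS: "\<And>t. s \<le> t \<Longrightarrow> t < s+n \<Longrightarrow> y t \<in> S"
    and bnd: "\<And>t. s \<le> t \<Longrightarrow> t < s+n \<Longrightarrow> norm (gr t) \<le> G"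
  shows "(\<Sum>t=s..<s+n. gr t \<bullet> (y t - u)) \<le> ((norm (y s - u))\<^sup>2 - (norm (y (s+n) - u))\<^sup>2)/(2*\<eta>) + n*\<eta>*G\<^sup>2/2"
  using rec inS bnd
proof (induction n)
  case 0 then show ?case by simp
next
  case (Suc n)
  have IH: "(\<Sum>t=s..<s+n. gr t \<bullet> (y t - u)) \<le> ((norm (y s - u))\<^sup>2 - (norm (y (s+n) - u))\<^sup>2)/(2*\<eta>) + n*\<eta>*G\<^sup>2/2"
    using Suc by auto
  have st: "gr (s+n) \<bullet> (y (s+n) - u) \<le> ((norm (y (s+n) - u))\<^sup>2 - (norm (closest_point S (y (s+n) - \<eta> *\<^sub>R gr (s+n)) - u))\<^sup>2)/(2*\<eta>) + \<eta>*G\<^sup>2/2"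
    by (rule ogd_step[OF S _ u eta]) (use Suc.prems in auto)
  have yS: "y (s + Suc n) = closest_point S (y (s+n) - \<eta> *\<^sub>R gr (s+n))" using Suc.prems(1)[of "s+n"] by simp
  have "(\<Sum>t=s..<s+Suc n. gr t \<bullet> (y t - u)) = (\<Sum>t=s..<s+n. gr t \<bullet> (y t - u)) + gr (s+n) \<bullet> (y (s+n) - u)"
    by simp
  also have "\<dots> \<le> ((norm (y s - u))\<^sup>2 - (norm (y (s+n) - u))\<^sup>2)/(2*\<eta>) + n*\<eta>*G\<^sup>2/2
      + (((norm (y (s+n) - u))\<^sup>2 - (norm (y (s + Suc n) - u))\<^sup>2)/(2*\<eta>) + \<eta>*G\<^sup>2/2)"
    using IH st unfolding yS by linarith
  also have "\<dots> = ((norm (y s - u))\<^sup>2 - (norm (y (s + Suc n) - u))\<^sup>2)/(2*\<eta>) + (Suc n)*\<eta>*G\<^sup>2/2"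
    using eta by (simp add: field_simps)
  finally show ?case .
qed

lemma e_ge: "exp (1::real) \<ge> 8/3"
proof -
  have "1 + 1/3 + (1/3)\<^sup>2/2 \<le> exp (1/3::real)" by (rule exp_lower_Taylor_quadratic) simp
  then have "(25/18::real) \<le> exp (1/3)" by (simp add: power2_eq_square)
  then have "(25/18::real)^3 \<le> exp (1/3) ^ 3" by (intro power_mono) auto
  also have "exp (1/3::real) ^ 3 = exp 1" by (simp flip: exp_of_nat_mult)
  finally show ?thesis by (simp add: eval_nat_numeral)
qed

lemma meta_step:
  fixes y :: "nat \<Rightarrow> 'a::euclidean_space"
  assumes K: "finite K" and S: "convex S" and \<phi>: "convex_on S \<phi>" and a: "\<And>k. k \<in> K \<Longrightarrow> a k \<ge> 0"
    and yS: "\<And>k. k \<in> K \<Longrightarrow> y k \<in> S" and z0: "0 \<in> S"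
    and z: "z = (\<Sum>k\<in>K. (a k / (\<Sum>k'\<in>K. a k')) *\<^sub>R y k)"
  shows "z \<in> S \<and> (\<Sum>k\<in>K. a k * (\<phi> z - \<phi> (y k))) \<le> 0"
proof (cases "(\<Sum>k'\<in>K. a k') = 0")
  case True
  then have "\<forall>k\<in>K. a k = 0" using sum_nonneg_eq_0_iff[OF K] a by blast
  then show ?thesis using z z0 by simp
next
  case False
  define W where "W = (\<Sum>k'\<in>K. a k')"
  have Wp: "W > 0" using False a unfolding W_def by (metis order_le_less sum_nonneg)
  have s1: "(\<Sum>k\<in>K. a k / W) = 1" using Wp unfolding W_def by (simp add: sum_divide_distrib[symmetric])
  have Kne: "K \<noteq> {}" using False by auto
  have zS: "z \<in> S" unfolding z W_def[symmetric] using convex_sum[OF K S s1] a yS Wp by auto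
  have "\<phi> z \<le> (\<Sum>k\<in>K. (a k / W) * \<phi> (y k))"
    unfolding z W_def[symmetric] using convex_on_sum[OF K Kne \<phi> s1] a yS Wp by auto
  then have "W * \<phi> z \<le> W * (\<Sum>k\<in>K. (a k / W) * \<phi> (y k))" using Wp by (intro mult_left_mono) auto
  also have "W * (\<Sum>k\<in>K. (a k / W) * \<phi> (y k)) = (\<Sum>k\<in>K. a k * \<phi> (y k))"
    using Wp by (simp add: sum_distrib_left)
  finally have "W * \<phi> z \<le> (\<Sum>k\<in>K. a k * \<phi> (y k))" .
  moreover have "(\<Sum>k\<in>K. a k * (\<phi> z - \<phi> (y k))) = W * \<phi> z - (\<Sum>k\<in>K. a k * \<phi> (y k))"
    unfolding W_def by (simp add: algebra_simps sum_subtractf sum_distrib_right sum_distrib_left)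
  ultimately show ?thesis using zS by simp
qed

lemma card_levels: assumes "T \<ge> 1" shows "real (card (levels T)) \<le> 1 + log 2 (real T)" "finite (levels T)"
proof -
  define n where "n = nat \<lfloor>log 2 (real T)\<rfloor>"
  have lg0: "log 2 (real T) \<ge> 0" using assms by simp
  have sub: "levels T \<subseteq> {..n}"
  proof
    fix k assume "k \<in> levels T"
    then have "2^k \<le> T" by (simp add: levels_def)
    then have "real (2^k) \<le> real T" by linarith
    then have "log 2 (real (2^k)) \<le> log 2 (real T)" using assms by (subst log_le_cancel_iff) auto
    then have "real k \<le> log 2 (real T)" by (simp add: log_nat_power)
    then have "int k \<le> \<lfloor>log 2 (real T)\<rfloor>" by (simp add: le_floor_iff)
    then show "k \<in> {..n}" unfolding n_def by auto
  qed
  then show "finite (levels T)" using finite_subset by blast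
  have "card (levels T) \<le> card {..n}" using sub by (intro card_mono) auto
  then have "card (levels T) \<le> n + 1" by simp
  moreover have "real n \<le> log 2 (real T)" unfolding n_def using lg0 by linarith
  ultimately show "real (card (levels T)) \<le> 1 + log 2 (real T)" by linarith
qed



lemma expert_regret:
  fixes \<Omega> :: "'a::euclidean_space set"
    and f :: "nat \<Rightarrow> 'a \<Rightarrow> real" and g :: "nat \<Rightarrow> 'a \<Rightarrow> 'a"
  assumes conv_dom: "convex \<Omega>" and closed_dom: "closed \<Omega>"
    and conv_f: "\<forall>t\<in>{1..T}. convex_on \<Omega> (f t)"
    and grad: "\<forall>t\<in>{1..T}. \<forall>v\<in>\<Omega>. (f t has_derivative (\<lambda>h. g t v \<bullet> h)) (at v within \<Omega>)"
    and A1: "\<forall>t\<in>{1..T}. \<forall>v\<in>\<Omega>. norm (g t v) \<le> G"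
    and Gpos: "G > 0"
    and A2_diam: "\<forall>v\<in>\<Omega>. \<forall>v'\<in>\<Omega>. norm (v - v') \<le> D"
    and init: "x1 k \<in> \<Omega>" and u: "u \<in> \<Omega>"
    and s1: "s \<ge> 1" and sT: "s + 2^k \<le> T + 1"
  shows "(\<Sum>t=s..<s+2^k. f t (expert_pt \<Omega> g D G x1 k t) - f t u) \<le> D * G * sqrt (2^k)"
proof -
  define x where "x = expert_pt \<Omega> g D G x1 k"
  define \<eta> where "\<eta> = eta D G k"
  have xS: "\<And>t. x t \<in> \<Omega>" unfolding x_def expert_pt_def using ogd_in[OF closed_dom init] by simp
  have D0: "D \<ge> 0" using A2_diam u by (metis norm_ge_zero order_trans)
  have tT: "\<And>t. t \<in> {s..<s+2^k} \<Longrightarrow> t \<in> {1..T}" using s1 sT by auto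
  have conv_step: "\<And>t. t \<in> {s..<s+2^k} \<Longrightarrow> f t (x t) - f t u \<le> g t (x t) \<bullet> (x t - u)"
    using convex_grad[OF conv_dom] conv_f grad xS u tT by blast
  show ?thesis
  proof (cases "D = 0")
    case True
    have "\<And>t. x t = u" using A2_diam xS u True by (metis norm_le_zero_iff right_minus_eq)
    then show ?thesis unfolding x_def[symmetric] using True by simp
  next
    case False
    then have Dp: "D > 0" using D0 by simp
    define q where "q = sqrt (2^k::real)"
    have qp: "q > 0" unfolding q_def by simp
    have qq: "q * q = 2^k" unfolding q_def by simp
    have etap: "\<eta> > 0" unfolding \<eta>_def eta_def using Dp Gpos by simp
    have eq: "\<eta> = D / (G * q)" unfolding \<eta>_def eta_def q_def by simp
    have rec: "\<And>t. s \<le> t \<Longrightarrow> t < s + 2^k \<Longrightarrow> x (Suc t) = closest_point \<Omega> (x t - \<eta> *\<^sub>R g t (x t))"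
      using s1 unfolding x_def expert_pt_def \<eta>_def by auto
    have bnd: "\<And>t. s \<le> t \<Longrightarrow> t < s + 2^k \<Longrightarrow> norm (g t (x t)) \<le> G"
      using A1 xS tT by auto
    have "(\<Sum>t=s..<s+2^k. f t (x t) - f t u) \<le> (\<Sum>t=s..<s+2^k. g t (x t) \<bullet> (x t - u))"
      by (intro sum_mono conv_step)
    also have "\<dots> \<le> ((norm (x s - u))\<^sup>2 - (norm (x (s+2^k) - u))\<^sup>2)/(2*\<eta>) + (2^k)*\<eta>*G\<^sup>2/2"
      using ogd_sum[where y=x and gr="\<lambda>t. g t (x t)" and s=s and n="2^k" and G=G, OF conv_dom closed_dom u etap rec _ bnd] xS by auto
    also have "\<dots> \<le> D\<^sup>2/(2*\<eta>) + (2^k)*\<eta>*G\<^sup>2/2"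
    proof -
      have "(norm (x s - u))\<^sup>2 \<le> D\<^sup>2" using A2_diam xS u by (intro power_mono) auto
      then have "(norm (x s - u))\<^sup>2 - (norm (x (s+2^k) - u))\<^sup>2 \<le> D\<^sup>2" by (smt (verit) zero_le_power2)
      then show ?thesis using etap by (simp add: divide_right_mono)
    qed
    also have "\<dots> = D * G * q"
      unfolding eq qq[symmetric] using qp Dp Gpos by (simp add: field_simps power2_eq_square)
    finally show ?thesis unfolding x_def q_def .
  qed
qed



theorem lemma2:
  fixes \<Omega> :: "'a::euclidean_space set"
    and f :: "nat \<Rightarrow> 'a \<Rightarrow> real" and g :: "nat \<Rightarrow> 'a \<Rightarrow> 'a"
    and D G :: real and T :: nat
    and x1 :: "nat \<Rightarrow> 'a" and w :: "nat \<Rightarrow> 'a"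
    and k m :: nat
  assumes conv_dom: "convex \<Omega>" and closed_dom: "closed \<Omega>"
    and conv_f: "\<forall>t\<in>{1..T}. convex_on \<Omega> (f t)"
    and grad: "\<forall>t\<in>{1..T}. \<forall>v\<in>\<Omega>. (f t has_derivative (\<lambda>h. g t v \<bullet> h)) (at v within \<Omega>)"
    and A1: "\<forall>t\<in>{1..T}. \<forall>v\<in>\<Omega>. norm (g t v) \<le> G"
    and Gpos: "G > 0"
    and A2_zero: "0 \<in> \<Omega>"
    and A2_diam: "\<forall>v\<in>\<Omega>. \<forall>v'\<in>\<Omega>. norm (v - v') \<le> D"
    and A3: "\<forall>t\<in>{1..T}. \<forall>v\<in>\<Omega>. 0 \<le> f t v \<and> f t v \<le> 1"
    and init: "\<forall>k. x1 k \<in> \<Omega>"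
    and play: "is_aod_play \<Omega> f g D G T x1 w"
    and J_level: "2 ^ k \<le> T" and J_idx: "m \<ge> 1" and J_end: "m * 2 ^ k \<le> T"
  shows "\<forall>u\<in>\<Omega>.
           (\<Sum>t = (m - 1) * 2 ^ k + 1 .. m * 2 ^ k. f t (w t))
         - (\<Sum>t = (m - 1) * 2 ^ k + 1 .. m * 2 ^ k. f t u)
         \<le> (sqrt (3 * c_fun T (m * 2 ^ k)) + D * G) * sqrt (real (2 ^ k))"
proof
  fix u assume u: "u \<in> \<Omega>"
  define L :: nat where "L = 2^k"
  define j where "j = m * L"
  define s0 where "s0 = (m - 1) * L + 1"
  define x where "x = (\<lambda>k'. expert_pt \<Omega> g D G x1 k')"
  define rr where "rr = (\<lambda>k' t. f t (w t) - f t (x k' t))"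
  define aw where "aw = (\<lambda>k' t. aod_w \<Omega> f g D G x1 w k' t)"
  have Lp: "L \<ge> 1" unfolding L_def by simp
  have j1: "j \<ge> 1" using J_idx Lp unfolding j_def by simp
  have jT: "j \<le> T" using J_end unfolding j_def L_def .
  have T1: "T \<ge> 1" using jT j1 by simp
  have s0j: "s0 + L = j + 1" using J_idx unfolding s0_def j_def by (cases m) auto
  have s01: "s0 \<ge> 1" unfolding s0_def by simp
  have xS: "\<And>k' t. x k' t \<in> \<Omega>" unfolding x_def expert_pt_def using ogd_in[OF closed_dom] init by simp
  have finlev: "finite (levels T)" using card_levels(2)[OF T1] .
  have aw_eq: "\<And>k' t. aw k' t = anh_weight (\<Sum>v=ivl_start k' t..<t. rr k' v) (\<Sum>v=ivl_start k' t..<t. \<bar>rr k' v\<bar>)"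
    unfolding aw_def aod_w_def R_stat_def C_stat_def rr_def x_def by simp
  have aw0: "\<And>k' t. aw k' t \<ge> 0" unfolding aw_eq by (intro anh_weight_nonneg sum_nonneg) auto
  have meta: "w t \<in> \<Omega> \<and> (\<Sum>k'\<in>levels T. aw k' t * (f t (w t) - f t (x k' t))) \<le> 0" if t: "t \<in> {1..T}" for t
  proof -
    have wt: "w t = (\<Sum>k'\<in>levels T. (aw k' t / (\<Sum>k''\<in>levels T. aw k'' t)) *\<^sub>R x k' t)"
      using play t unfolding is_aod_play_def aod_p_def aw_def x_def by auto
    show ?thesis
      using meta_step[where K="levels T" and S=\<Omega> and \<phi>="f t" and a="\<lambda>k'. aw k' t" and y="\<lambda>k'. x k' t" and z="w t"]
        finlev conv_dom conv_f t aw0 xS A2_zero wt by auto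
  qed
  have rr_bd: "\<bar>rr k' t\<bar> \<le> 1" if t: "t \<in> {1..T}" for k' t
  proof -
    have "w t \<in> \<Omega>" using meta[OF t] by simp
    then have "0 \<le> f t (w t)" "f t (w t) \<le> 1" "0 \<le> f t (x k' t)" "f t (x k' t) \<le> 1"
      using A3 t xS by auto
    then show ?thesis unfolding rr_def by auto
  qed
  define st :: "nat \<Rightarrow> nat \<Rightarrow> nat" where "st = (\<lambda>k' i. 2^k' * i + 1)"
  define en where "en = (\<lambda>k' i. min (2^k' * Suc i) j + 1)"
  define B where "B = 1 + 4 * ln (1 + real j)"
  have setEq: "{st k' i..<en k' i} = {v \<in> {1..j}. (v - 1) div 2^k' = i}" for k' i
  proof -
    have "v \<in> {st k' i..<en k' i} \<longleftrightarrow> v \<in> {v \<in> {1..j}. (v - 1) div 2^k' = i}" for v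
    proof -
      have "v \<in> {st k' i..<en k' i} \<longleftrightarrow> (1 \<le> v \<and> v \<le> j \<and> 2^k' * i \<le> v - 1 \<and> v - 1 < 2^k' * Suc i)"
        by (auto simp: st_def en_def)
      also have "\<dots> \<longleftrightarrow> (1 \<le> v \<and> v \<le> j \<and> (v - 1) div 2^k' = i)"
        using div_iff_nat[of "2^k'" "v - 1" i] by simp
      finally show ?thesis by simp
    qed
    then show ?thesis by blast
  qed
  have ivl: "ivl_start k' v = st k' i" if v: "v \<in> {st k' i..<en k' i}" for k' i v
  proof -
    have "(v - 1) div 2^k' = i" using v setEq by blast
    then show ?thesis unfolding ivl_start_def st_def by (simp add: mult.commute)
  qed
  have pot: "Phi (\<Sum>v=st k' i..<en k' i. rr k' v) (\<Sum>v=st k' i..<en k' i. \<bar>rr k' v\<bar>) \<le> B + (\<Sum>v=st k' i..<en k' i. aw k' v * rr k' v)" for k' i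
  proof -
    have bd: "\<bar>rr k' v\<bar> \<le> 1" if "st k' i \<le> v" "v < en k' i" for v
      using that jT by (intro rr_bd) (auto simp: st_def en_def)
    have a1: "Phi (\<Sum>v=st k' i..<en k' i. rr k' v) (\<Sum>v=st k' i..<en k' i. \<bar>rr k' v\<bar>) \<le> 1
     + (\<Sum>v=st k' i..<en k' i. anh_weight (\<Sum>q=st k' i..<v. rr k' q) (\<Sum>q=st k' i..<v. \<bar>rr k' q\<bar>) * rr k' v)
     + 2 * (\<Sum>v=st k' i..<en k' i. \<bar>rr k' v\<bar> / ((\<Sum>q=st k' i..<v. \<bar>rr k' q\<bar>) + 1))"
      by (rule anh_seq) (rule bd)
    have sumeq: "(\<Sum>v=st k' i..<en k' i. anh_weight (\<Sum>q=st k' i..<v. rr k' q) (\<Sum>q=st k' i..<v. \<bar>rr k' q\<bar>) * rr k' v)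
      = (\<Sum>v=st k' i..<en k' i. aw k' v * rr k' v)"
      by (rule sum.cong) (auto simp: aw_eq ivl)
    have lg: "(\<Sum>v=st k' i..<en k' i. \<bar>rr k' v\<bar> / ((\<Sum>q=st k' i..<v. \<bar>rr k' q\<bar>) + 1))
       \<le> 2 * ln (1 + (\<Sum>v=st k' i..<en k' i. \<bar>rr k' v\<bar>))"
      by (rule log_seq) (rule bd)
    have "(\<Sum>v=st k' i..<en k' i. \<bar>rr k' v\<bar>) \<le> real (card {st k' i..<en k' i}) * 1"
      by (rule sum_bounded_above) (use bd in auto)
    also have "real (card {st k' i..<en k' i}) * 1 \<le> real j" by (auto simp: st_def en_def)
    finally have Cj: "(\<Sum>v=st k' i..<en k' i. \<bar>rr k' v\<bar>) \<le> real j" .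
    have C0: "0 \<le> (\<Sum>v=st k' i..<en k' i. \<bar>rr k' v\<bar>)" by (simp add: sum_nonneg)
    have "ln (1 + (\<Sum>v=st k' i..<en k' i. \<bar>rr k' v\<bar>)) \<le> ln (1 + real j)"
    proof -
      have pos: "0 < 1 + (\<Sum>v=st k' i..<en k' i. \<bar>rr k' v\<bar>)" using C0 by linarith
      have pos2: "0 < 1 + real j" by simp
      show ?thesis using ln_le_cancel_iff[OF pos pos2] Cj by simp
    qed
    then show ?thesis using a1 sumeq lg unfolding B_def by linarith
  qed
  have group: "(\<Sum>i<j. \<Sum>v=st k' i..<en k' i. aw k' v * rr k' v) = (\<Sum>v\<in>{1..j}. aw k' v * rr k' v)" for k'
  proof -
    have img: "(\<lambda>v. (v - 1) div 2^k') ` {1..j} \<subseteq> {..<j}"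
    proof
      fix y assume "y \<in> (\<lambda>v. (v - 1) div 2^k') ` {1..j}"
      then obtain v where v: "v \<in> {1..j}" "y = (v - 1) div 2^k'" by auto
      have "(v - 1) div 2^k' \<le> v - 1" by (rule div_le_dividend)
      moreover have "v - 1 < j" using v by auto
      ultimately have "(v - 1) div 2^k' < j" by (rule le_less_trans)
      then show "y \<in> {..<j}" using v by simp
    qed
    show ?thesis
      using sum.group[OF _ _ img, of "\<lambda>v. aw k' v * rr k' v"] by (simp add: setEq)
  qed
  have total: "(\<Sum>k'\<in>levels T. \<Sum>i<j. Phi (\<Sum>v=st k' i..<en k' i. rr k' v) (\<Sum>v=st k' i..<en k' i. \<bar>rr k' v\<bar>))
      \<le> real (card (levels T)) * real j * B"
  proof -
    have "(\<Sum>k'\<in>levels T. \<Sum>i<j. Phi (\<Sum>v=st k' i..<en k' i. rr k' v) (\<Sum>v=st k' i..<en k' i. \<bar>rr k' v\<bar>))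
       \<le> (\<Sum>k'\<in>levels T. \<Sum>i<j. B + (\<Sum>v=st k' i..<en k' i. aw k' v * rr k' v))"
      by (intro sum_mono pot)
    also have "\<dots> = real (card (levels T)) * real j * B + (\<Sum>k'\<in>levels T. \<Sum>v\<in>{1..j}. aw k' v * rr k' v)"
      by (simp add: sum.distrib group)
    also have "(\<Sum>k'\<in>levels T. \<Sum>v\<in>{1..j}. aw k' v * rr k' v) = (\<Sum>v\<in>{1..j}. \<Sum>k'\<in>levels T. aw k' v * rr k' v)"
      by (rule sum.swap)
    also have "\<dots> \<le> 0"
    proof (rule sum_nonpos)
      fix v assume "v \<in> {1..j}"
      then have "v \<in> {1..T}" using jT by auto
      then show "(\<Sum>k'\<in>levels T. aw k' v * rr k' v) \<le> 0" using meta unfolding rr_def by auto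
    qed
    finally show ?thesis by simp
  qed
  define RJ where "RJ = (\<Sum>v=s0..<j+1. rr k v)"
  define CJ where "CJ = (\<Sum>v=s0..<j+1. \<bar>rr k v\<bar>)"
  define N where "N = real (card (levels T))"
  have klev: "k \<in> levels T" using J_level by (simp add: levels_def)
  have stk: "st k (m - 1) = s0" unfolding st_def s0_def L_def by (simp add: mult.commute)
  have enk: "en k (m - 1) = j + 1" unfolding en_def j_def L_def using J_idx by (simp add: mult.commute)
  have mj: "m - 1 \<in> {..<j}"
  proof -
    have h: "m * 1 \<le> m * L" using Lp by (rule mult_le_mono2)
    have "m - 1 < m * L" using h J_idx by linarith
    then show ?thesis unfolding j_def by simp
  qed
  have potnn: "\<And>k' i. 0 \<le> Phi (\<Sum>v=st k' i..<en k' i. rr k' v) (\<Sum>v=st k' i..<en k' i. \<bar>rr k' v\<bar>)"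
    using Phi_pos less_imp_le by blast
  have "Phi RJ CJ = Phi (\<Sum>v=st k (m - 1)..<en k (m - 1). rr k v) (\<Sum>v=st k (m - 1)..<en k (m - 1). \<bar>rr k v\<bar>)"
    unfolding RJ_def CJ_def stk enk ..
  also have "\<dots> \<le> (\<Sum>i<j. Phi (\<Sum>v=st k i..<en k i. rr k v) (\<Sum>v=st k i..<en k i. \<bar>rr k v\<bar>))"
    by (rule member_le_sum[OF mj]) (auto simp: potnn)
  also have "\<dots> \<le> (\<Sum>k'\<in>levels T. \<Sum>i<j. Phi (\<Sum>v=st k' i..<en k' i. rr k' v) (\<Sum>v=st k' i..<en k' i. \<bar>rr k' v\<bar>))"
    by (rule member_le_sum[OF klev]) (auto simp: potnn sum_nonneg finlev)
  also have "\<dots> \<le> N * real j * B" unfolding N_def by (rule total)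
  finally have PhiJ: "Phi RJ CJ \<le> N * real j * B" .
  have "card (levels T) > 0" using klev finlev card_gt_0_iff by blast
  then have N1: "N \<ge> 1" unfolding N_def by linarith
  have NT: "N \<le> 1 + log 2 (real T)" unfolding N_def by (rule card_levels(1)[OF T1])
  define c where "c = c_fun T j"
  have lgT: "log 2 (real T) \<ge> 0" using T1 by simp
  have lnj: "ln (1 + real j) \<ge> 0" by simp
  have c0: "c \<ge> 0"
  proof -
    have "ln (real j) \<ge> 0" using j1 by simp
    moreover have "ln (1 + log 2 (real T)) \<ge> 0" using lgT by simp
    moreover have "ln ((5 + 3 * ln (1 + real j)) / 2) \<ge> 0" using lnj by simp
    ultimately show ?thesis unfolding c_def c_fun_def by linarith
  qed
  have B1: "B \<ge> 1" unfolding B_def using lnj by simp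
  have lnbound: "ln (N * real j * B) \<le> c"
  proof -
    have "ln (N * real j * B) = ln N + ln (real j) + ln B" using N1 j1 B1 by (simp add: ln_mult)
    moreover have "ln N \<le> ln (1 + log 2 (real T))" using N1 NT by simp
    moreover have "ln B \<le> 1 + ln ((5 + 3 * ln (1 + real j)) / 2)"
    proof -
      have "B \<le> exp 1 * ((5 + 3 * ln (1 + real j)) / 2)"
      proof -
        have "(8/3) * ((5 + 3 * ln (1 + real j)) / 2) \<le> exp 1 * ((5 + 3 * ln (1 + real j)) / 2)"
          using e_ge lnj by (intro mult_right_mono) auto
        moreover have "B \<le> (8/3) * ((5 + 3 * ln (1 + real j)) / 2)" unfolding B_def using lnj by simp
        ultimately show ?thesis by linarith
      qed
      then have "ln B \<le> ln (exp 1 * ((5 + 3 * ln (1 + real j)) / 2))" using B1 by simp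
      also have "\<dots> = 1 + ln ((5 + 3 * ln (1 + real j)) / 2)"
      proof -
        have "0 < 5 + 3 * ln (1 + real j)" using lnj by linarith
        then have pz: "0 < (5 + 3 * ln (1 + real j)) / 2" by simp
        define Y where "Y = (5 + 3 * ln (1 + real j)) / 2"
        have "ln (exp 1 * Y) = ln (exp 1) + ln Y" using pz unfolding Y_def by (simp only: ln_mult) simp
        then show ?thesis unfolding Y_def by simp
      qed
      finally show ?thesis .
    qed
    ultimately show ?thesis unfolding c_def c_fun_def by linarith
  qed
  have cardJ: "card {s0..<j+1} = L" using s0j by simp
  have CJL: "CJ \<le> real L"
  proof -
    have "CJ \<le> real (card {s0..<j+1}) * 1" unfolding CJ_def
      by (rule sum_bounded_above) (use rr_bd s01 jT in auto)
    then show ?thesis using cardJ by simp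
  qed
  have RJb: "RJ \<le> sqrt (3 * c) * sqrt (real L)"
  proof (cases "RJ \<le> 0")
    case True
    have "0 \<le> sqrt (3 * c) * sqrt (real L)" using c0 by simp
    then show ?thesis using True by linarith
  next
    case False
    then have RJp: "RJ > 0" by simp
    have RC: "\<bar>RJ\<bar> \<le> CJ" unfolding RJ_def CJ_def by (rule sum_abs)
    then have CJp: "CJ > 0" using RJp by simp
    have "exp (RJ\<^sup>2 / (3 * CJ)) \<le> N * real j * B" using PhiJ RJp unfolding Phi_def by simp
    moreover have ypos: "0 < N * real j * B" using N1 j1 B1 by (intro mult_pos_pos) auto
    ultimately have "RJ\<^sup>2 / (3 * CJ) \<le> ln (N * real j * B)" by (metis exp_le_cancel_iff exp_ln)
    then have "RJ\<^sup>2 / (3 * CJ) \<le> c" using lnbound by simp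
    then have "RJ\<^sup>2 \<le> 3 * CJ * c" using CJp by (simp add: divide_le_eq mult.commute)
    also have "\<dots> \<le> 3 * real L * c" using CJL c0 by (intro mult_right_mono) auto
    finally have "RJ \<le> sqrt (3 * real L * c)" by (rule real_le_rsqrt)
    also have "sqrt (3 * real L * c) = sqrt (3 * c) * sqrt (real L)" by (simp add: real_sqrt_mult mult_ac)
    finally show ?thesis .
  qed
  have expr: "(\<Sum>t=s0..<s0+2^k. f t (expert_pt \<Omega> g D G x1 k t) - f t u) \<le> D * G * sqrt (2^k)"
    by (rule expert_regret[OF conv_dom closed_dom conv_f grad A1 Gpos A2_diam _ u s01])
       (use init s0j jT in \<open>auto simp: L_def\<close>)
  have setJ: "{(m - 1) * 2 ^ k + 1 .. m * 2 ^ k} = {s0..<s0+2^k}"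
    using s0j unfolding s0_def j_def L_def by auto
  have "(\<Sum>t = (m - 1) * 2 ^ k + 1 .. m * 2 ^ k. f t (w t)) - (\<Sum>t = (m - 1) * 2 ^ k + 1 .. m * 2 ^ k. f t u)
      = (\<Sum>t=s0..<s0+2^k. rr k t) + (\<Sum>t=s0..<s0+2^k. f t (expert_pt \<Omega> g D G x1 k t) - f t u)"
    unfolding setJ rr_def x_def by (simp add: sum_subtractf[symmetric] sum.distrib[symmetric])
  also have "(\<Sum>t=s0..<s0+2^k. rr k t) = RJ" unfolding RJ_def using s0j by (simp add: L_def)
  finally show "(\<Sum>t = (m - 1) * 2 ^ k + 1 .. m * 2 ^ k. f t (w t)) - (\<Sum>t = (m - 1) * 2 ^ k + 1 .. m * 2 ^ k. f t u)
         \<le> (sqrt (3 * c_fun T (m * 2 ^ k)) + D * G) * sqrt (real (2 ^ k))"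
    using RJb expr unfolding c_def j_def L_def by (simp add: algebra_simps)
qed

end
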